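(* Let $n,k,r$ be integers with $k,r\geq 2$ and $n\geq k+r-1$. If $H$ is a vertex-$k$-maximal $r$-uniform hypergraph on $n$ vertices, then $\overline{\kappa}(H)=\kappa(H)=k$.
   Context: A hypergraph $H=(V,E)$ consists of a finite vertex set $V$ and a set $E$ of non-empty subsets of $V$ (edges). $H$ is $r$-uniform if every edge has exactly $r$ elements. $K_n^r$ denotes the complete $r$-uniform hypergraph on $n$ vertices (all $r$-subsets are edges; no edges if $n<r$). The complement $H^c$ of an $r$-uniform hypergraph $H=(V,E)$ is the $r$-uniform hypergraph on $V$ whose edges are the $r$-subsets of $V$ not in $E$. A subhypergraph of $H$ is $H'=(V',E')$ with $V'\subseteq V$, $E'\subseteq E$ (and edges of $E'$ contained in $V'$). For an $r$-subset $e\in E(H^c)$, $H+e=(V,E\cup\{e\})$. For $Y\subseteq V$, $H[Y]$ is the induced hypergraph with vertex set $Y$ and edges $\{e\in E: e\subseteq Y\}$, and $H-Y=H[V\setminus Y]$. A path is an alternating sequence $v_1,e_1,v_2,\dots,e_s,v_{s+1}$ of distinct vertices and distinct edges with $v_i,v_{i+1}\in e_i$; $H$ is connected if any two vertices are joined by a path. A vertex-cut is a set $X\subseteq V$ with $H-X$ disconnected. The vertex-connectivity $\kappa(H)$ is the minimum size of a vertex-cut if $H$ has one, and $|V(H)|-1$ otherwise. $\overline{\kappa}(H)=\max\{\kappa(H'): H'\text{ a subhypergraph of }H\}$. An $r$-uniform hypergraph $H$ is vertex-$k$-maximal if $\overline{\kappa}(H)\leq k$ but $\overline{\kappa}(H+e)\geq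 k+1$ for every $e\in E(H^c)$. *)

theory Defs
  imports Main
begin

definition hypergraph :: "'a set \<Rightarrow> 'a set set \<Rightarrow> bool" where
  "hypergraph V E \<longleftrightarrow> finite V \<and> (\<forall>e\<in>E. e \<noteq> {} \<and> e \<subseteq> V)"

definition uniform_hg :: "nat \<Rightarrow> 'a set \<Rightarrow> 'a set set \<Rightarrow> bool" where
  "uniform_hg r V E \<longleftrightarrow> hypergraph V E \<and> (\<forall>e\<in>E. card e = r)"

definition is_path :: "'a set \<Rightarrow> 'a set set \<Rightarrow> 'a list \<Rightarrow> 'a set list \<Rightarrow> bool" where
  "is_path V E vs es \<longleftrightarrow> length vs = Suc (length es) \<and> distinct vs \<and> distinct es
     \<and> set vs \<subseteq> V \<and> set es \<subseteq> E
     \<and> (\<forall>i<length es. vs ! i \<in> es ! i \<and> vs ! Suc i \<in> es ! i)"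

definition hg_connected :: "'a set \<Rightarrow> 'a set set \<Rightarrow> bool" where
  "hg_connected V E \<longleftrightarrow>
     (\<forall>u\<in>V. \<forall>v\<in>V. \<exists>vs es. is_path V E vs es \<and> hd vs = u \<and> last vs = v)"

definition induced_edges :: "'a set set \<Rightarrow> 'a set \<Rightarrow> 'a set set" where
  "induced_edges E Y = {e \<in> E. e \<subseteq> Y}"

definition vertex_cut :: "'a set \<Rightarrow> 'a set set \<Rightarrow> 'a set \<Rightarrow> bool" where
  "vertex_cut V E X \<longleftrightarrow> X \<subseteq> V \<and> \<not> hg_connected (V - X) (induced_edges E (V - X))"

definition kappa :: "'a set \<Rightarrow> 'a set set \<Rightarrow> int" where
  "kappa V E = (if \<exists>X. vertex_cut V E X
                then int (Min {card X | X. vertex_cut V E X})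
                else int (card V) - 1)"

definition subhypergraph :: "'a set \<Rightarrow> 'a set set \<Rightarrow> 'a set \<Rightarrow> 'a set set \<Rightarrow> bool" where
  "subhypergraph V' E' V E \<longleftrightarrow> V' \<subseteq> V \<and> E' \<subseteq> E \<and> (\<forall>e\<in>E'. e \<subseteq> V')"

definition kappa_bar :: "'a set \<Rightarrow> 'a set set \<Rightarrow> int" where
  "kappa_bar V E = Max {kappa V' E' | V' E'. subhypergraph V' E' V E}"

definition vertex_k_maximal :: "nat \<Rightarrow> nat \<Rightarrow> 'a set \<Rightarrow> 'a set set \<Rightarrow> bool" where
  "vertex_k_maximal k r V E \<longleftrightarrow>
     kappa_bar V E \<le> int k \<and>
     (\<forall>e. e \<subseteq> V \<and> card e = r \<and> e \<notin> E \<longrightarrow> kappa_bar V (insert e E) \<ge> int k + 1)"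

end

theory Submission
  imports Defs
begin

lemma path_single: "u \<in> V \<Longrightarrow> is_path V E [u] []"
  by (simp add: is_path_def)

lemma path_prefix:
  assumes "is_path V E vs es" "j < length vs"
  shows "is_path V E (take (Suc j) vs) (take j es)"
proof -
  have le: "j \<le> length es" using assms by (simp add: is_path_def)
  show ?thesis using assms le unfolding is_path_def
    by (auto simp: min_def nth_take dest: in_set_takeD)
qed

lemma path_extend:
  assumes p: "is_path V E vs es" and j: "j < length vs"
    and f: "f \<in> E" "vs!j \<in> f" "f \<notin> set (take j es)"
    and y: "y \<in> f" "y \<in> V" "y \<notin> set (take (Suc j) vs)"
  shows "is_path V E (take (Suc j) vs @ [y]) (take j es @ [f])"
proof -
  have pp: "is_path V E (take (Suc j) vs) (take j es)" by (rule path_prefix[OF p j])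
  have l1: "length (take (Suc j) vs) = Suc j" using j by simp
  have l2: "length (take j es) = j" using pp l1 by (simp add: is_path_def)
  have nth1: "\<forall>i<j. (take (Suc j) vs)!i \<in> (take j es)!i \<and> (take (Suc j) vs)!Suc i \<in> (take j es)!i"
    using pp l2 unfolding is_path_def by auto
  have nth2: "\<forall>i<length (take j es @ [f]). (take (Suc j) vs @ [y]) ! i \<in> (take j es @ [f]) ! i \<and>
          (take (Suc j) vs @ [y]) ! Suc i \<in> (take j es @ [f]) ! i"
  proof (intro allI impI)
    fix i assume i: "i < length (take j es @ [f])"
    show "(take (Suc j) vs @ [y]) ! i \<in> (take j es @ [f]) ! i \<and>
          (take (Suc j) vs @ [y]) ! Suc i \<in> (take j es @ [f]) ! i"
    proof (cases "i < j")
      case True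
      then show ?thesis using nth1 l1 l2 by (simp add: nth_append)
    next
      case False
      then have "i = j" using i l2 by simp
      then show ?thesis using l1 l2 f y j by (simp add: nth_append)
    qed
  qed
  have "length (take (Suc j) vs @ [y]) = Suc (length (take j es @ [f]))" using l1 l2 by simp
  moreover have "distinct (take (Suc j) vs @ [y])" using pp y by (simp add: is_path_def)
  moreover have "distinct (take j es @ [f])" using pp f by (simp add: is_path_def)
  moreover have "set (take (Suc j) vs @ [y]) \<subseteq> V" using pp y by (simp add: is_path_def)
  moreover have "set (take j es @ [f]) \<subseteq> E" using pp f by (simp add: is_path_def)
  ultimately show ?thesis using nth2 unfolding is_path_def by blast
qed

lemma path_stays:
  assumes p: "is_path S F vs es" and h: "hd vs \<in> C"
    and cl: "\<forall>g\<in>F. g \<inter> C \<noteq> {} \<longrightarrow> g \<subseteq> C"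
  shows "\<forall>i<length vs. vs!i \<in> C"
proof (intro allI impI)
  fix i assume "i < length vs"
  then show "vs!i \<in> C"
  proof (induction i)
    case 0
    then have "vs \<noteq> []" by auto
    then show ?case using h by (simp add: hd_conv_nth)
  next
    case (Suc i)
    then have i: "i < length es" using p by (simp add: is_path_def)
    have ein: "es!i \<in> F" using p i by (auto simp: is_path_def)
    have "vs!i \<in> es!i" "vs!Suc i \<in> es!i" using p i by (auto simp: is_path_def)
    moreover have "vs!i \<in> C" using Suc by simp
    ultimately show ?case using cl ein by blast
  qed
qed

lemma not_conn:
  assumes a: "a \<in> S" "a \<in> C" and b: "b \<in> S" "b \<notin> C"
    and cl: "\<forall>g\<in>induced_edges F S. g \<inter> C \<noteq> {} \<longrightarrow> g \<subseteq> C"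
  shows "\<not> hg_connected S (induced_edges F S)"
proof
  assume "hg_connected S (induced_edges F S)"
  then obtain vs es where p: "is_path S (induced_edges F S) vs es" "hd vs = a" "last vs = b"
    using a b unfolding hg_connected_def by blast
  have ne: "vs \<noteq> []" using p by (auto simp: is_path_def)
  have "\<forall>i<length vs. vs!i \<in> C" using path_stays[OF p(1) _ cl] p a by simp
  then have "last vs \<in> C" using ne by (simp add: last_conv_nth)
  then show False using p b by simp
qed

lemma kb_fin:
  assumes "finite V"
  shows "finite {kappa V' E' | V' E'. subhypergraph V' E' V E}"
proof -
  have "{kappa V' E' | V' E'. subhypergraph V' E' V E}
        \<subseteq> (\<lambda>(A,B). kappa A B) ` (Pow V \<times> Pow (Pow V))"
    unfolding subhypergraph_def image_iff by force
  moreover have "finite ((\<lambda>(A,B). kappa A B) ` (Pow V \<times> Pow (Pow V)))"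
    using assms by simp
  ultimately show ?thesis by (rule finite_subset)
qed

lemma kb_ge:
  assumes "finite V" "subhypergraph V' E' V E"
  shows "kappa V' E' \<le> kappa_bar V E"
  unfolding kappa_bar_def using assms kb_fin[OF assms(1)] by (intro Max_ge) auto

lemma kb_obtain:
  assumes "finite V"
  shows "\<exists>V' E'. subhypergraph V' E' V E \<and> kappa V' E' = kappa_bar V E"
proof -
  have "subhypergraph {} {} V E" by (simp add: subhypergraph_def)
  then have ne: "{kappa V' E' | V' E'. subhypergraph V' E' V E} \<noteq> {}" by blast
  have "kappa_bar V E \<in> {kappa V' E' | V' E'. subhypergraph V' E' V E}"
    unfolding kappa_bar_def using Max_in[OF kb_fin[OF assms] ne] .
  then obtain V' E' where "kappa_bar V E = kappa V' E'" "subhypergraph V' E' V E" by blast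
  then show ?thesis by metis
qed

lemma cuts_fin:
  assumes "finite V"
  shows "finite {card X | X. vertex_cut V E X}"
proof -
  have "{card X | X. vertex_cut V E X} \<subseteq> card ` Pow V"
    unfolding vertex_cut_def by auto
  then show ?thesis using assms finite_subset by blast
qed

lemma kappa_le_cut:
  assumes "finite V" "vertex_cut V E X"
  shows "kappa V E \<le> int (card X)"
proof -
  have "Min {card X | X. vertex_cut V E X} \<le> card X"
    using assms cuts_fin[OF assms(1)] by (intro Min_le) auto
  then show ?thesis using assms unfolding kappa_def by auto
qed

lemma conn_small:
  assumes "card S \<le> 1" "finite S"
  shows "hg_connected S F"
  unfolding hg_connected_def
proof (intro ballI)
  fix u v assume uv: "u \<in> S" "v \<in> S"
  then have "u = v" using assms card_le_Suc0_iff_eq[of S] by simp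
  then show "\<exists>vs es. is_path S F vs es \<and> hd vs = u \<and> last vs = v"
    using path_single[OF uv(1)] by force
qed

lemma kappa_le_card:
  assumes "finite V"
  shows "kappa V E \<le> int (card V) - 1"
proof (cases "\<exists>X. vertex_cut V E X")
  case True
  then obtain X where X: "vertex_cut V E X" by blast
  then have XV: "X \<subseteq> V" and nc: "\<not> hg_connected (V - X) (induced_edges E (V - X))"
    by (auto simp: vertex_cut_def)
  have "\<not> card (V - X) \<le> 1" using nc conn_small assms by blast
  then have "card (V - X) \<ge> 2" by linarith
  moreover have "card (V - X) = card V - card X" using XV assms by (simp add: card_Diff_subset finite_subset)
  moreover have "card X \<le> card V" using XV assms card_mono by blast
  ultimately have "card X + 1 \<le> card V" by linarith
  then show ?thesis using kappa_le_cut[OF assms X] by linarith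
next
  case False
  then show ?thesis by (simp add: kappa_def)
qed

lemma kappa_ge:
  assumes "finite V" "\<forall>X. vertex_cut V E X \<longrightarrow> card X \<ge> m" "int m \<le> int (card V) - 1"
  shows "kappa V E \<ge> int m"
proof (cases "\<exists>X. vertex_cut V E X")
  case True
  then have ne: "{card X | X. vertex_cut V E X} \<noteq> {}" by blast
  have "Min {card X | X. vertex_cut V E X} \<in> {card X | X. vertex_cut V E X}"
    using Min_in[OF cuts_fin[OF assms(1)] ne] .
  then have "Min {card X | X. vertex_cut V E X} \<ge> m" using assms(2) by auto
  then show ?thesis using True by (simp add: kappa_def)
next
  case False
  then show ?thesis using assms(3) by (simp add: kappa_def)
qed

lemma key:
  assumes fin: "finite V" and hE: "\<forall>e\<in>E. e \<subseteq> V"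
    and kb: "kappa_bar V E \<le> int k"
    and km: "\<forall>e. e \<subseteq> V \<and> card e = r \<and> e \<notin> E \<longrightarrow> kappa_bar V (insert e E) \<ge> int k + 1"
    and r2: "r \<ge> 2" and cV: "card V \<ge> k + r - 1" and k2: "k \<ge> 2"
    and cut: "vertex_cut V E X"
  shows "card X \<ge> k"
proof (rule ccontr)
  assume "\<not> k \<le> card X"
  then have cX: "card X < k" by simp
  from cut have XV: "X \<subseteq> V" and nc: "\<not> hg_connected (V - X) (induced_edges E (V - X))"
    by (auto simp: vertex_cut_def)
  define EH where "EH = induced_edges E (V - X)"
  obtain u v where u: "u \<in> V - X" and v: "v \<in> V - X"
    and noP: "\<not> (\<exists>vs es. is_path (V - X) EH vs es \<and> hd vs = u \<and> last vs = v)"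
    using nc unfolding hg_connected_def EH_def by blast
  define C where "C = {w \<in> V - X. \<exists>vs es. is_path (V - X) EH vs es \<and> hd vs = u \<and> last vs = w}"
  have uC: "u \<in> C" unfolding C_def using u path_single[OF u, of EH] by force
  have vC: "v \<notin> C" unfolding C_def using noP by blast
  have clos: "\<forall>g\<in>EH. g \<inter> C \<noteq> {} \<longrightarrow> g \<subseteq> C"
  proof (intro ballI impI subsetI)
    fix g y assume g: "g \<in> EH" and gC: "g \<inter> C \<noteq> {}" and y: "y \<in> g"
    obtain x where x: "x \<in> g" "x \<in> C" using gC by blast
    then obtain vs es where p: "is_path (V - X) EH vs es" "hd vs = u" "last vs = x"
      unfolding C_def by blast
    have gsub: "g \<subseteq> V - X" using g unfolding EH_def induced_edges_def by blast
    have yV: "y \<in> V - X" using gsub y by blast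
    have ne: "vs \<noteq> []" using p by (auto simp: is_path_def)
    have lens: "length vs = Suc (length es)" using p by (simp add: is_path_def)
    show "y \<in> C"
    proof (cases "y \<in> set vs")
      case True
      then obtain i where i: "i < length vs" "vs ! i = y" by (metis in_set_conv_nth)
      have pp: "is_path (V - X) EH (take (Suc i) vs) (take i es)" by (rule path_prefix[OF p(1) i(1)])
      have "hd (take (Suc i) vs) = u" using p ne by simp
      moreover have "last (take (Suc i) vs) = y" using i by (simp add: take_Suc_conv_app_nth)
      ultimately show ?thesis unfolding C_def using pp yV by blast
    next
      case False
      have "\<exists>j<length vs. vs!j \<in> g \<and> g \<notin> set (take j es)"
      proof (cases "g \<in> set es")
        case True
        then obtain j where j: "j < length es" "es ! j = g" by (metis in_set_conv_nth)
        have d: "distinct es" using p by (simp add: is_path_def)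
        have "g \<notin> set (take j es)"
        proof
          assume "g \<in> set (take j es)"
          then obtain m where "m < length (take j es)" "take j es ! m = g" by (metis in_set_conv_nth)
          then have "m < j" "es ! m = g" by auto
          then show False using d j nth_eq_iff_index_eq by fastforce
        qed
        moreover have "vs!j \<in> g" using p j by (auto simp: is_path_def)
        ultimately show ?thesis using j lens by (intro exI[of _ j]) auto
      next
        case False
        have "vs ! length es = x" using p(3) lens ne by (simp add: last_conv_nth)
        then show ?thesis using False x lens by (intro exI[of _ "length es"]) auto
      qed
      then obtain j where j: "j < length vs" "vs!j \<in> g" "g \<notin> set (take j es)" by blast
      have yn: "y \<notin> set (take (Suc j) vs)" using False by (meson in_set_takeD)
      have pe: "is_path (V - X) EH (take (Suc j) vs @ [y]) (take j es @ [f])" if "f = g" for f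
        using path_extend[OF p(1) j(1) g j(2) j(3) y yV yn] that by simp
      have "hd (take (Suc j) vs @ [y]) = u" using p ne by simp
      then show ?thesis unfolding C_def using pe yV by fastforce
    qed
  qed
  have uv: "u \<noteq> v" using uC vC by blast
  have finVX: "finite (V - X)" using fin by simp
  have cVX: "card (V - X) = card V - card X" using XV fin by (simp add: card_Diff_subset finite_subset)
  have cVXr: "card (V - X) \<ge> r" using cVX cV cX by linarith
  have c2: "card (V - X - {u, v}) = card (V - X) - 2" using u v uv finVX by (simp add: card_Diff_subset)
  obtain S where S: "S \<subseteq> V - X - {u, v}" "card S = r - 2"
    using obtain_subset_with_card_n[of "r - 2" "V - X - {u,v}"] c2 cVXr by force
  have finS: "finite S" using S finVX finite_subset by blast
  define e where "e = insert u (insert v S)"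
  have uS: "u \<notin> S" "v \<notin> S" using S by auto
  have ce: "card e = r" unfolding e_def using S(2) finS uv r2 uS by simp
  have eVX: "e \<subseteq> V - X" unfolding e_def using S u v by blast
  have eE: "e \<notin> E"
  proof
    assume "e \<in> E"
    then have "e \<in> EH" using eVX unfolding EH_def induced_edges_def by blast
    moreover have "e \<inter> C \<noteq> {}" using uC unfolding e_def by blast
    ultimately have "e \<subseteq> C" using clos by blast
    then show False using vC unfolding e_def by blast
  qed
  have kbe: "kappa_bar V (insert e E) \<ge> int k + 1" using km eVX ce eE by blast
  obtain V' E' where sub: "subhypergraph V' E' V (insert e E)" and kV': "kappa V' E' = kappa_bar V (insert e E)"
    using kb_obtain[OF fin] by blast
  have V'V: "V' \<subseteq> V" and E'E: "E' \<subseteq> insert e E" and E'V': "\<forall>g\<in>E'. g \<subseteq> V'"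
    using sub by (auto simp: subhypergraph_def)
  have finV': "finite V'" using V'V fin finite_subset by blast
  have eE': "e \<in> E'"
  proof (rule ccontr)
    assume "e \<notin> E'"
    then have "subhypergraph V' E' V E" using sub by (auto simp: subhypergraph_def)
    then have "kappa V' E' \<le> kappa_bar V E" by (rule kb_ge[OF fin])
    then show False using kb kbe kV' by linarith
  qed
  have eV': "e \<subseteq> V'" using eE' E'V' by blast
  have uV': "u \<in> V'" and vV': "v \<in> V'" using eV' unfolding e_def by auto
  have cV'k: "card V' \<ge> k + 2"
  proof (rule ccontr)
    assume "\<not> ?thesis"
    then have "int (card V') - 1 \<le> int k" by linarith
    then show False using kappa_le_card[OF finV', of E'] kbe kV' by linarith
  qed
  have cXV': "card (X \<inter> V') \<le> card X" using fin XV by (meson card_mono finite_subset inf_le1)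
  have "card V' = card (V' - X) + card (V' \<inter> X)"
    using finV' by (metis Int_commute card_Diff_subset_Int Diff_Diff_Int card_Un_disjoint
        Diff_disjoint Diff_partition Int_lower1 Un_Diff_Int finite_Diff finite_Int)
  then have c3: "card (V' - X) \<ge> 3" using cV'k cXV' cX by (simp add: Int_commute)
  have "card (V' - X - {u, v}) \<ge> 1"
  proof -
    have "card (V' - X - {u, v}) \<ge> card (V' - X) - card {u, v}" by (rule diff_card_le_card_Diff) (use finV' in simp)
    then show ?thesis using c3 uv by simp
  qed
  then obtain w where w: "w \<in> V' - X" "w \<noteq> u" "w \<noteq> v"
    by (metis Diff_iff card_0_eq finite_Diff finV' insertCI not_one_le_zero ex_in_conv)
  have cutY: "kappa V' E' \<le> int k"
    if z: "z \<in> e" "z \<in> V'" and a: "a \<in> V' - insert z (X \<inter> V')" "a \<in> C"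
      and b: "b \<in> V' - insert z (X \<inter> V')" "b \<notin> C" for z a b
  proof -
    define Y where "Y = insert z (X \<inter> V')"
    have cl: "\<forall>g\<in>induced_edges E' (V' - Y). g \<inter> C \<noteq> {} \<longrightarrow> g \<subseteq> C"
    proof (intro ballI)
      fix g assume g: "g \<in> induced_edges E' (V' - Y)"
      then have gE': "g \<in> E'" and gs: "g \<subseteq> V' - Y" by (auto simp: induced_edges_def)
      have "g \<noteq> e" using gs z unfolding Y_def by blast
      then have "g \<in> E" using gE' E'E by blast
      moreover have "g \<subseteq> V - X" using gs V'V unfolding Y_def by blast
      ultimately have "g \<in> EH" unfolding EH_def induced_edges_def by blast
      then show "g \<inter> C \<noteq> {} \<longrightarrow> g \<subseteq> C" using clos by blast
    qed
    have "\<not> hg_connected (V' - Y) (induced_edges E' (V' - Y))"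
      by (rule not_conn[of a _ C b]) (use a b cl Y_def in auto)
    moreover have "Y \<subseteq> V'" unfolding Y_def using z by blast
    ultimately have vc: "vertex_cut V' E' Y" by (simp add: vertex_cut_def)
    have "card Y \<le> Suc (card (X \<inter> V'))" unfolding Y_def
      using finV' by (simp add: card_insert_if)
    then have "card Y \<le> k" using cXV' cX by linarith
    then show ?thesis using kappa_le_cut[OF finV' vc] by linarith
  qed
  have "kappa V' E' \<le> int k"
  proof (cases "w \<in> C")
    case True
    show ?thesis by (rule cutY[of u w v]) (use True w vC v uV' vV' uv in \<open>auto simp: e_def\<close>)
  next
    case False
    show ?thesis by (rule cutY[of v u w]) (use False w uC u uV' vV' uv in \<open>auto simp: e_def\<close>)
  qed
  then show False using kbe kV' by linarith
qed

theorem lemma2p1: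
  fixes V :: "'a set" and E :: "'a set set" and n k r :: nat
  assumes "k \<ge> 2" and "r \<ge> 2" and "n \<ge> k + r - 1"
    and "uniform_hg r V E" and "card V = n"
    and "vertex_k_maximal k r V E"
  shows "kappa_bar V E = int k \<and> kappa V E = int k"
proof -
  from assms(4) have fin: "finite V" and hE: "\<forall>e\<in>E. e \<subseteq> V"
    by (auto simp: uniform_hg_def hypergraph_def)
  from assms(6) have kb: "kappa_bar V E \<le> int k"
    and km: "\<forall>e. e \<subseteq> V \<and> card e = r \<and> e \<notin> E \<longrightarrow> kappa_bar V (insert e E) \<ge> int k + 1"
    by (auto simp: vertex_k_maximal_def)
  have cV: "card V \<ge> k + r - 1" using assms by simp
  have "kappa V E \<ge> int k"
  proof (rule kappa_ge[OF fin])
    show "\<forall>X. vertex_cut V E X \<longrightarrow> k \<le> card X"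
      using key[OF fin hE kb km assms(2) cV assms(1)] by blast
    show "int k \<le> int (card V) - 1" using cV assms(2) by linarith
  qed
  moreover have "subhypergraph V E V E" using hE by (simp add: subhypergraph_def)
  then have "kappa V E \<le> kappa_bar V E" by (rule kb_ge[OF fin])
  ultimately show ?thesis using kb by linarith
qed

end
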